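(* Let $\mathcal{K}\subset L^2(G)$ be a reproducing kernel Hilbert space satisfying (LOC) and (WUC) for some admissible weight $w$. For every $\varepsilon\in(0,1)$ there exists a compact unit neighborhood $U\subset G$ such that: if $\Lambda$ is relatively separated and $U$-dense in $G$ and $(U_\lambda)_{\lambda\in\Lambda}$ is a disjoint cover associated to $\Lambda$ and $U$, then $(\mu_G(U_\lambda)^{1/2}k_\lambda)_{\lambda\in\Lambda}$ is a frame for $\mathcal{K}$ with lower frame bound $1-\varepsilon$ and upper frame bound $1+\varepsilon$.
   Context: $G$ is a $\sigma$-compact locally compact group with left Haar measure $\mu_G$; $Q$ a fixed symmetric open relatively compact neighborhood of $e$. $M_Qf(x)=\operatorname{ess\,sup}_{y\in xQ}|f(y)|$, $M_Q^Rf(x)=\operatorname{ess\,sup}_{y\in Qx}|f(y)|$. Admissible weight: measurable submultiplicative $w:G\to[1,\infty)$. $\mathcal{W}_w(G)=\{f\in C(G): w\cdot M_Q^RM_Qf\in L^1(G)\}$. RKHS $\mathcal{K}\subset L^2(G)$: closed separable subspace with bounded point evaluations, $f(x)=\langle f,k_x\rangle$, $k(x,y)=\langle k_y,k_x\rangle$. (LOC): $|k(x,y)|\le\Theta(y^{-1}x)$ for a non-negative $\Theta\in\mathcal{W}_w(G)$. (WUC): there are non-negative $\Theta'\in\mathcal{W}_w(G)$ and $\eta:G\to[0,\infty)$ with $\eta(x)\to0$ as $x\to e$ such that $\big||f(x)|^2-|f(y)|^2\big|\le\eta(y^{-1}x)\int_G|f(z)|^2\Theta'(z^{-1}y)\,d\mu_G(z)$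 for all $f\in\mathcal{K}$, $x,y$. $\Lambda$ (family, repetitions allowed) is relatively separated if $\sup_x\#(\Lambda\cap xQ)<\infty$, $U$-dense if $G=\bigcup_\lambda\lambda U$; a disjoint cover associated to $\Lambda,U$ is a family of Borel sets $U_\lambda\subset\lambda U$ whose disjoint union is $G$. Frame bounds $A,B$: $A\|f\|^2\le\sum|\langle f,g_\lambda\rangle|^2\le B\|f\|^2$. *)

theory Defs
  imports "HOL-Analysis.Analysis" "HOL-Probability.Probability"
begin

text \<open>Convention: the group G is a type of class topological_group_add; the group
 law x y is written x + y, the inverse y^(-1) is written - y, the identity e is 0.
 The class group_add is NOT assumed commutative.\<close>

definition sigma_compact_group :: "'g::{topological_group_add,t2_space} itself \<Rightarrow> bool" where
  "sigma_compact_group _ \<longleftrightarrow>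
     locally_compact_space (euclidean :: 'g topology) \<and>
     (\<exists>C :: nat \<Rightarrow> 'g set. (\<forall>n. compact (C n)) \<and> (\<Union>n. C n) = UNIV)"

definition left_haar :: "('g::{topological_group_add,t2_space}) measure \<Rightarrow> bool" where
  "left_haar M \<longleftrightarrow>
     sets M = sets borel \<and>
     (\<forall>x. \<forall>A\<in>sets borel. emeasure M ((\<lambda>y. x + y) ` A) = emeasure M A) \<and>
     (\<forall>K. compact K \<longrightarrow> emeasure M K < \<infinity>) \<and>
     (\<forall>U. open U \<and> U \<noteq> {} \<longrightarrow> emeasure M U > 0) \<and>
     (\<forall>A\<in>sets borel. emeasure M A = (INF U\<in>{U. open U \<and> A \<subseteq> U}. emeasure M U)) \<and>
     (\<forall>U. open U \<longrightarrow> emeasure M U = (SUP K\<in>{K. compact K \<and> K \<subseteq> U}. emeasure M K))"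

definition std_nbhd :: "('g::{topological_group_add,t2_space}) set \<Rightarrow> bool" where
  "std_nbhd Q \<longleftrightarrow> open Q \<and> 0 \<in> Q \<and> uminus ` Q = Q \<and> compact (closure Q)"

definition esssup_on :: "'g measure \<Rightarrow> 'g set \<Rightarrow> ('g \<Rightarrow> ereal) \<Rightarrow> ereal" where
  "esssup_on M A g = Inf {c. AE y in M. y \<in> A \<longrightarrow> g y \<le> c}"

definition loc_max :: "'g measure \<Rightarrow> ('g::group_add) set \<Rightarrow> ('g \<Rightarrow> real) \<Rightarrow> 'g \<Rightarrow> ereal" where
  "loc_max M Q f x = esssup_on M ((\<lambda>q. x + q) ` Q) (\<lambda>y. ereal \<bar>f y\<bar>)"

definition loc_max_R :: "'g measure \<Rightarrow> ('g::group_add) set \<Rightarrow> ('g \<Rightarrow> ereal) \<Rightarrow> 'g \<Rightarrow> ereal" where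
  "loc_max_R M Q g x = esssup_on M ((\<lambda>q. q + x) ` Q) (\<lambda>y. \<bar>g y\<bar>)"

definition admissible_weight :: "('g::{topological_group_add,t2_space}) measure \<Rightarrow> ('g \<Rightarrow> real) \<Rightarrow> bool" where
  "admissible_weight M w \<longleftrightarrow> w \<in> borel_measurable M \<and> (\<forall>x. 1 \<le> w x) \<and>
     (\<forall>x y. w (x + y) \<le> w x * w y)"

definition wiener :: "('g::{topological_group_add,t2_space}) measure \<Rightarrow> 'g set \<Rightarrow> ('g \<Rightarrow> real) \<Rightarrow> ('g \<Rightarrow> real) set" where
  "wiener M Q w = {f. continuous_on UNIV f \<and>
     (\<lambda>x. ereal (w x) * loc_max_R M Q (loc_max M Q f) x) \<in> borel_measurable M \<and>
     (\<integral>\<^sup>+ x. e2ennreal (ereal (w x) * loc_max_R M Q (loc_max M Q f) x) \<partial>M) < \<infinity>}"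

definition L2_inner :: "'g measure \<Rightarrow> ('g \<Rightarrow> complex) \<Rightarrow> ('g \<Rightarrow> complex) \<Rightarrow> complex" where
  "L2_inner M f g = (\<integral> z. f z * cnj (g z) \<partial>M)"

definition L2_normsq :: "'g measure \<Rightarrow> ('g \<Rightarrow> complex) \<Rightarrow> real" where
  "L2_normsq M f = (\<integral> z. (cmod (f z))\<^sup>2 \<partial>M)"

definition square_integrable :: "'g measure \<Rightarrow> ('g \<Rightarrow> complex) \<Rightarrow> bool" where
  "square_integrable M f \<longleftrightarrow> f \<in> borel_measurable M \<and> integrable M (\<lambda>z. (cmod (f z))\<^sup>2)"

text \<open>RKHS: a closed separable linear subspace K of L^2(M) (elements are genuine functions,
 the pointwise representatives) with reproducing kernel functions kf x = k_x in K,
 f x = <f, k_x> for all f in K.\<close>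
definition rkhs :: "'g measure \<Rightarrow> ('g \<Rightarrow> complex) set \<Rightarrow> ('g \<Rightarrow> 'g \<Rightarrow> complex) \<Rightarrow> bool" where
  "rkhs M K kf \<longleftrightarrow>
     (\<forall>f\<in>K. square_integrable M f) \<and>
     (\<lambda>_. 0) \<in> K \<and>
     (\<forall>f\<in>K. \<forall>g\<in>K. (\<lambda>z. f z + g z) \<in> K) \<and>
     (\<forall>f\<in>K. \<forall>c. (\<lambda>z. c * f z) \<in> K) \<and>
     (\<forall>fs g. (\<forall>n. fs n \<in> K) \<and> square_integrable M g \<and>
         (\<lambda>n. L2_normsq M (\<lambda>z. fs n z - g z)) \<longlonglongrightarrow> 0
        \<longrightarrow> (\<exists>h\<in>K. AE z in M. h z = g z)) \<and>
     (\<exists>D\<subseteq>K. countable D \<and> (\<forall>f\<in>K. \<forall>e>0. \<exists>d\<in>D. L2_normsq M (\<lambda>z. f z - d z) < e)) \<and>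
     (\<forall>x. kf x \<in> K) \<and>
     (\<forall>f\<in>K. \<forall>x. f x = L2_inner M f (kf x))"

definition rk :: "'g measure \<Rightarrow> ('g \<Rightarrow> 'g \<Rightarrow> complex) \<Rightarrow> 'g \<Rightarrow> 'g \<Rightarrow> complex" where
  "rk M kf x y = L2_inner M (kf y) (kf x)"

definition LOC :: "('g::{topological_group_add,t2_space}) measure \<Rightarrow> 'g set \<Rightarrow> ('g \<Rightarrow> real) \<Rightarrow> ('g \<Rightarrow> 'g \<Rightarrow> complex) \<Rightarrow> bool" where
  "LOC M Q w kf \<longleftrightarrow> (\<exists>\<Theta>\<in>wiener M Q w. (\<forall>x. 0 \<le> \<Theta> x) \<and>
     (\<forall>x y. cmod (rk M kf x y) \<le> \<Theta> (- y + x)))"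

definition WUC :: "('g::{topological_group_add,t2_space}) measure \<Rightarrow> 'g set \<Rightarrow> ('g \<Rightarrow> real) \<Rightarrow> ('g \<Rightarrow> complex) set \<Rightarrow> bool" where
  "WUC M Q w K \<longleftrightarrow> (\<exists>\<Theta>'\<in>wiener M Q w. \<exists>\<eta>::'g \<Rightarrow> real. (\<forall>x. 0 \<le> \<Theta>' x) \<and> (\<forall>x. 0 \<le> \<eta> x) \<and>
     (\<eta> \<longlongrightarrow> 0) (at 0) \<and>
     (\<forall>f\<in>K. \<forall>x y. ennreal \<bar>(cmod (f x))\<^sup>2 - (cmod (f y))\<^sup>2\<bar>
         \<le> ennreal (\<eta> (- y + x)) * (\<integral>\<^sup>+ z. ennreal ((cmod (f z))\<^sup>2 * \<Theta>' (- z + y)) \<partial>M)))"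

text \<open>Families Lambda = (lam i)_{i in I}, repetitions allowed.\<close>
definition rel_separated :: "'g set \<Rightarrow> 'i set \<Rightarrow> ('i \<Rightarrow> ('g::group_add)) \<Rightarrow> bool" where
  "rel_separated Q I lam \<longleftrightarrow> (\<exists>N::nat. \<forall>x. finite {i\<in>I. lam i \<in> (\<lambda>q. x + q) ` Q} \<and>
      card {i\<in>I. lam i \<in> (\<lambda>q. x + q) ` Q} \<le> N)"

definition U_dense :: "'g set \<Rightarrow> 'i set \<Rightarrow> ('i \<Rightarrow> ('g::group_add)) \<Rightarrow> bool" where
  "U_dense U I lam \<longleftrightarrow> (\<Union>i\<in>I. (\<lambda>u. lam i + u) ` U) = UNIV"

definition disjoint_cover :: "'g set \<Rightarrow> 'i set \<Rightarrow> ('i \<Rightarrow> ('g::{group_add,topological_space})) \<Rightarrow> ('i \<Rightarrow> 'g set) \<Rightarrow> bool" where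
  "disjoint_cover U I lam V \<longleftrightarrow> (\<forall>i\<in>I. V i \<in> sets borel \<and> V i \<subseteq> (\<lambda>u. lam i + u) ` U) \<and>
     disjoint_family_on V I \<and> (\<Union>i\<in>I. V i) = UNIV"

definition frame_bounds :: "'g measure \<Rightarrow> ('g \<Rightarrow> complex) set \<Rightarrow> 'i set \<Rightarrow> ('i \<Rightarrow> 'g \<Rightarrow> complex) \<Rightarrow> real \<Rightarrow> real \<Rightarrow> bool" where
  "frame_bounds M K I g A B \<longleftrightarrow> (\<forall>f\<in>K.
     (\<lambda>i. (cmod (L2_inner M f (g i)))\<^sup>2) summable_on I \<and>
     A * L2_normsq M f \<le> (\<Sum>\<^sub>\<infinity>i\<in>I. (cmod (L2_inner M f (g i)))\<^sup>2) \<and>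
     (\<Sum>\<^sub>\<infinity>i\<in>I. (cmod (L2_inner M f (g i)))\<^sup>2) \<le> B * L2_normsq M f)"

end

theory Submission
  imports Defs
begin

lemma haus_t2: "Hausdorff_space (euclidean :: 'a::t2_space topology)"
  unfolding Hausdorff_space_def disjnt_def
  by (metis open_openin separation_t2)

lemma small_compact_nbhd:
  fixes P Q :: "'a::t2_space set"
  assumes "open P" "open Q" "a \<in> P" "a \<in> Q" "compact (closure Q)"
  shows "\<exists>U. compact U \<and> a \<in> interior U \<and> U \<subseteq> P \<and> U \<subseteq> Q"
proof -
  define K0 where "K0 = closure Q \<inter> - (P \<inter> Q)"
  have "closed (- (P \<inter> Q))" using assms(1,2) by (intro closed_Compl open_Int)
  then have cK0: "compact K0" unfolding K0_def using assms(5) by (rule compact_Int_closed[rotated])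
  have "a \<notin> K0" using assms unfolding K0_def by blast
  then have dj: "disjnt {a} K0" by (simp add: disjnt_def)
  have c1: "compactin euclidean {a}" by simp
  have c2: "compactin euclidean K0" using cK0 by simp
  obtain A B where AB: "openin euclidean A" "openin euclidean B" "{a} \<subseteq> A" "K0 \<subseteq> B" "disjnt A B"
    by (rule Hausdorff_space_compact_separation[OF haus_t2 c1 c2 dj])
  define U where "U = closure (A \<inter> Q)"
  have oA: "open A" "open B" using AB(1,2) open_openin by blast+
  have "A \<inter> Q \<subseteq> Q" by blast
  then have sub: "U \<subseteq> closure Q" unfolding U_def by (rule closure_mono)
  then have "U = closure Q \<inter> U" by blast
  moreover have "compact (closure Q \<inter> U)"
    using assms(5) by (rule compact_Int_closed) (simp add: U_def)
  ultimately have cU: "compact U" by simp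
  have "A \<inter> Q \<subseteq> U" unfolding U_def by (rule closure_subset)
  moreover have "open (A \<inter> Q)" using oA(1) assms(2) by (rule open_Int)
  ultimately have "A \<inter> Q \<subseteq> interior U" by (rule interior_maximal)
  moreover have "a \<in> A \<inter> Q" using AB(3) assms(4) by blast
  ultimately have ai: "a \<in> interior U" by blast
  have "B \<inter> (A \<inter> Q) = {}" using AB(5) by (auto simp: disjnt_def)
  then have "B \<inter> U = {}" unfolding U_def using open_Int_closure_eq_empty[OF oA(2)] by blast
  then have "U \<subseteq> P \<inter> Q" using sub AB(4) unfolding K0_def by blast
  then show ?thesis using cU ai by blast
qed

lemma open_ltrans:
  fixes A :: "'a::topological_group_add set"
  assumes "open A" shows "open ((\<lambda>q. x + q) ` A)"
proof -
  have "(\<lambda>q. x + q) ` A = (\<lambda>y. - x + y) -` A"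
    by (auto simp: image_iff add.assoc[symmetric] intro!: bexI[of _ "- x + _"])
  moreover have "continuous_on UNIV (\<lambda>y. - x + y)" by (intro continuous_intros)
  ultimately show ?thesis using assms by (simp add: open_vimage)
qed

lemma open_rtrans:
  fixes A :: "'a::topological_group_add set"
  assumes "open A" shows "open ((\<lambda>q. q + x) ` A)"
proof -
  have "(\<lambda>q. q + x) ` A = (\<lambda>y. y + - x) -` A"
    by (auto simp: image_iff add.assoc intro!: bexI[of _ "_ + - x"])
  moreover have "continuous_on UNIV (\<lambda>y. y + - x)" by (intro continuous_intros)
  ultimately show ?thesis using assms by (simp add: open_vimage)
qed

lemma haar_facts:
  assumes "left_haar M"
  shows "sets M = sets borel" "space M = UNIV"
    "\<And>U. open U \<Longrightarrow> U \<noteq> {} \<Longrightarrow> emeasure M U > 0"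
    "\<And>K. compact K \<Longrightarrow> emeasure M K < \<infinity>"
    "\<And>x A. A \<in> sets borel \<Longrightarrow> emeasure M ((\<lambda>y. x + y) ` A) = emeasure M A"
proof -
  have h1: "sets M = sets borel" using assms unfolding left_haar_def by (elim conjE) assumption
  have h2: "\<forall>x. \<forall>A\<in>sets borel. emeasure M ((\<lambda>y. x + y) ` A) = emeasure M A"
    using assms unfolding left_haar_def by (elim conjE) assumption
  have h3: "\<forall>K. compact K \<longrightarrow> emeasure M K < \<infinity>" using assms unfolding left_haar_def by (elim conjE) assumption
  have h4: "\<forall>U. open U \<and> U \<noteq> {} \<longrightarrow> emeasure M U > 0" using assms unfolding left_haar_def by (elim conjE) assumption
  note h = h1 h2 h3 h4
  show "sets M = sets borel" by (fact h(1))
  show "space M = UNIV" using sets_eq_imp_space_eq[OF h(1)] by simp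
  show "\<And>U. open U \<Longrightarrow> U \<noteq> {} \<Longrightarrow> emeasure M U > 0" using h(4) by blast
  show "\<And>K. compact K \<Longrightarrow> emeasure M K < \<infinity>" using h(3) by blast
  show "\<And>x A. A \<in> sets borel \<Longrightarrow> emeasure M ((\<lambda>y. x + y) ` A) = emeasure M A" using h(2) by blast
qed

lemma esssup_lower:
  fixes g :: "'a::{topological_group_add,t2_space} \<Rightarrow> ereal"
  assumes haar: "left_haar M" and W: "open W" "x0 \<in> W" "W \<subseteq> A" and gt: "\<forall>y\<in>W. r < g y"
  shows "r \<le> esssup_on M A g"
proof -
  have "W \<noteq> {}" using W(2) by blast
  then have pos: "emeasure M W > 0" by (rule haar_facts(3)[OF haar W(1)])
  have spc: "space M = UNIV" by (rule haar_facts(2)[OF haar])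
  show ?thesis unfolding esssup_on_def
  proof (rule Inf_greatest)
    fix c assume "c \<in> {c. AE y in M. y \<in> A \<longrightarrow> g y \<le> c}"
    hence ae: "AE y in M. y \<in> A \<longrightarrow> g y \<le> c" by simp
    show "r \<le> c"
    proof (rule ccontr)
      assume "\<not> r \<le> c" hence cr: "c < r" by simp
      obtain N where N: "{y\<in>space M. \<not>(y \<in> A \<longrightarrow> g y \<le> c)} \<subseteq> N" "emeasure M N = 0" "N \<in> sets M"
        by (rule AE_E[OF ae])
      have "W \<subseteq> N"
      proof
        fix y assume "y \<in> W"
        then have "y \<in> A" using W(3) by blast
        have "r < g y" using gt \<open>y \<in> W\<close> by blast
        with cr have "c < g y" by (rule less_trans)
        then have "y \<in> {y\<in>space M. \<not>(y \<in> A \<longrightarrow> g y \<le> c)}" using spc \<open>y \<in> A\<close> by (simp add: not_le)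
        then show "y \<in> N" using N(1) by blast
      qed
      hence "emeasure M W \<le> emeasure M N" by (rule emeasure_mono) (fact N(3))
      with pos N(2) show False by simp
    qed
  qed
qed

lemma theta_le_h:
  fixes \<Theta> :: "'a::{topological_group_add,t2_space} \<Rightarrow> real"
  assumes haar: "left_haar M" and Q: "std_nbhd Q" and cont: "continuous_on UNIV \<Theta>"
    and nonneg: "\<forall>x. 0 \<le> \<Theta> x" and u: "u \<in> Q"
  shows "ereal (\<Theta> (a + - u)) \<le> loc_max_R M Q (loc_max M Q \<Theta>) a"
proof -
  define c0 where "c0 = a + - u"
  have oQ: "open Q" "0 \<in> Q" "uminus ` Q = Q" using Q unfolding std_nbhd_def by auto
  have step1: "ereal (\<Theta> c0) \<le> loc_max M Q \<Theta> b" if hb: "c0 \<in> (\<lambda>q. b + q) ` Q" for b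
    unfolding loc_max_def
  proof (rule dense_le)
    fix x assume x: "x < ereal (\<Theta> c0)"
    have cc: "continuous_on UNIV (\<lambda>y. ereal \<bar>\<Theta> y\<bar>)"
      by (intro continuous_on_ereal continuous_intros cont)
    have op: "open ((\<lambda>q. b + q) ` Q \<inter> {y. x < ereal \<bar>\<Theta> y\<bar>})"
      by (intro open_Int open_ltrans oQ open_Collect_less continuous_on_const cc)
    have "c0 \<in> (\<lambda>q. b + q) ` Q \<inter> {y. x < ereal \<bar>\<Theta> y\<bar>}"
      using hb x nonneg by simp
    then show "x \<le> esssup_on M ((\<lambda>q. b + q) ` Q) (\<lambda>y. ereal \<bar>\<Theta> y\<bar>)"
      by (intro esssup_lower[OF haar op, of c0]) auto
  qed
  show ?thesis unfolding loc_max_R_def c0_def[symmetric]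
  proof (rule dense_le)
    fix x assume x: "x < ereal (\<Theta> c0)"
    have op: "open ((\<lambda>q. q + a) ` Q \<inter> (\<lambda>q. c0 + q) ` Q)"
      by (intro open_Int open_ltrans open_rtrans oQ)
    have a1: "a \<in> (\<lambda>q. q + a) ` Q" using oQ by (auto intro!: image_eqI[of _ _ 0])
    have a2: "a \<in> (\<lambda>q. c0 + q) ` Q" using u unfolding c0_def
      by (auto simp: add.assoc intro!: image_eqI[of _ _ u])
    have gt: "x < \<bar>loc_max M Q \<Theta> y\<bar>" if y: "y \<in> (\<lambda>q. c0 + q) ` Q" for y
    proof -
      from y obtain q where q: "q \<in> Q" "y = c0 + q" by auto
      have "- q \<in> Q" using oQ(3) q(1) by force
      moreover have "c0 = y + - q" using q(2) by (simp add: add.assoc)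
      ultimately have "c0 \<in> (\<lambda>q. y + q) ` Q" by (intro image_eqI[of c0 _ "- q"]) auto
      then have "ereal (\<Theta> c0) \<le> loc_max M Q \<Theta> y" by (rule step1)
      also have "\<dots> \<le> \<bar>loc_max M Q \<Theta> y\<bar>" by (cases "loc_max M Q \<Theta> y") auto
      finally show ?thesis using x by simp
    qed
    have "a \<in> (\<lambda>q. q + a) ` Q \<inter> (\<lambda>q. c0 + q) ` Q" using a1 a2 by simp
    then show "x \<le> esssup_on M ((\<lambda>q. q + a) ` Q) (\<lambda>y. \<bar>loc_max M Q \<Theta> y\<bar>)"
      by (intro esssup_lower[OF haar op, of a]) (use gt in auto)
  qed
qed

lemma ennreal_tri:
  fixes a b :: real
  assumes "0 \<le> a" "0 \<le> b"
  shows "ennreal a \<le> ennreal b + ennreal \<bar>b - a\<bar>"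
proof -
  have "ennreal b + ennreal \<bar>b - a\<bar> = ennreal (b + \<bar>b - a\<bar>)"
    using assms by (intro ennreal_plus[symmetric]) auto
  moreover have "a \<le> b + \<bar>b - a\<bar>" by linarith
  ultimately show ?thesis by (simp add: ennreal_leI)
qed

lemma sum_ind_single:
  fixes I :: "nat set" and V :: "nat \<Rightarrow> 'a set"
  assumes disj: "disjoint_family_on V I" and cov: "(\<Union>i\<in>I. V i) = UNIV"
  shows "(\<Sum>n. (if n \<in> I then indicator (V n) z else 0) * (c::ennreal)) = c"
proof -
  obtain m where m: "m \<in> I" "z \<in> V m" using cov by blast
  have "(\<lambda>n. (if n \<in> I then indicator (V n) z else 0) * c) = (\<lambda>n. if n = m then c else 0)"
  proof
    fix n show "(if n \<in> I then indicator (V n) z else 0) * c = (if n = m then c else 0)"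
    proof (cases "n = m")
      case True then show ?thesis using m by simp
    next
      case False
      show ?thesis
      proof (cases "n \<in> I")
        case True
        then have "z \<notin> V n" using disj m False unfolding disjoint_family_on_def by blast
        then show ?thesis using False True by simp
      qed (use False in simp)
    qed
  qed
  moreover have "(\<lambda>n. if n = m then c else 0) sums c" using sums_single[of m "\<lambda>_. c"] by simp
  ultimately show ?thesis by (simp add: sums_iff)
qed

lemma ereal_w_mult:
  assumes "ereal t \<le> hh" "0 \<le> t" "1 \<le> (ww::real)"
  shows "ereal t \<le> ereal ww * hh"
proof (cases hh)
  case (real r)
  then have tr: "t \<le> r" using assms(1) by simp
  have "1 * r \<le> ww * r" using assms(2,3) tr by (intro mult_right_mono) auto
  then show ?thesis using real tr by simp
next
  case PInf
  then show ?thesis using assms(3) by simp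
next
  case MInf
  then show ?thesis using assms(1) by simp
qed

lemma transl_measurable:
  fixes z :: "'g::{topological_group_add,t2_space}"
  assumes "sets M = sets borel"
  shows "(\<lambda>x. - z + x) \<in> measurable M M"
proof -
  have "(\<lambda>x. - z + x) \<in> measurable borel borel"
    by (rule borel_measurable_continuous_onI) (intro continuous_intros)
  then show ?thesis using measurable_cong_sets[OF assms assms] by simp
qed

lemma transl_inv:
  fixes M :: "('g::{topological_group_add,t2_space}) measure"
  assumes haar: "left_haar M" and Gm: "G \<in> borel_measurable M"
  shows "(\<integral>\<^sup>+ x. G (- z + x) \<partial>M) = (\<integral>\<^sup>+ x. G x \<partial>M)"
proof -
  have sM: "sets M = sets borel" by (rule haar_facts(1)[OF haar])
  have spc: "space M = UNIV" by (rule haar_facts(2)[OF haar])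
  have Tm: "(\<lambda>x. - z + x) \<in> measurable M M" by (rule transl_measurable[OF sM])
  have D: "distr M M (\<lambda>x. - z + x) = M"
  proof (rule measure_eqI)
    show "sets (distr M M (\<lambda>x. - z + x)) = sets M" by simp
    fix A assume "A \<in> sets (distr M M (\<lambda>x. - z + x))"
    then have A: "A \<in> sets M" by simp
    have "(\<lambda>x. - z + x) -` A \<inter> space M = (\<lambda>y. z + y) ` A"
    proof -
      have "x \<in> (\<lambda>y. z + y) ` A \<longleftrightarrow> - z + x \<in> A" for x
      proof
        assume "x \<in> (\<lambda>y. z + y) ` A"
        then obtain y where "y \<in> A" "x = z + y" by blast
        then show "- z + x \<in> A" by (simp add: add.assoc[symmetric])
      next
        assume "- z + x \<in> A"
        moreover have "x = z + (- z + x)" by (simp add: add.assoc[symmetric])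
        ultimately show "x \<in> (\<lambda>y. z + y) ` A" by blast
      qed
      then show ?thesis using spc by blast
    qed
    moreover have "A \<in> sets borel" using A sM by simp
    ultimately show "emeasure (distr M M (\<lambda>x. - z + x)) A = emeasure M A"
      using emeasure_distr[OF Tm A] haar_facts(5)[OF haar, of A z] by simp
  qed
  have "(\<integral>\<^sup>+ x. G x \<partial>M) = (\<integral>\<^sup>+ x. G x \<partial>distr M M (\<lambda>x. - z + x))" using D by simp
  also have "\<dots> = (\<integral>\<^sup>+ x. G (- z + x) \<partial>M)"
  proof (rule nn_integral_distr[OF Tm])
    show "G \<in> borel_measurable (distr M M (\<lambda>x. - z + x))" using Gm D by simp
  qed
  finally show ?thesis by simp
qed

lemma Vfin:
  fixes M :: "('g::{topological_group_add,t2_space}) measure"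
  assumes haar: "left_haar M" and U: "compact U" and V: "V \<subseteq> (\<lambda>u. l + u) ` U"
  shows "emeasure M V = ennreal (measure M V)"
proof -
  have c: "compact ((\<lambda>u. l + u) ` U)"
    by (rule compact_continuous_image[OF _ U]) (intro continuous_intros)
  then have "(\<lambda>u. l + u) ` U \<in> sets M" using haar_facts(1)[OF haar] by (simp add: compact_imp_closed)
  then have "emeasure M V \<le> emeasure M ((\<lambda>u. l + u) ` U)" using V by (rule emeasure_mono[rotated])
  also have "\<dots> < \<infinity>" by (rule haar_facts(4)[OF haar c])
  finally show ?thesis by (intro emeasure_eq_ennreal_measure) simp
qed

theorem lemma5p1:
  fixes M :: "('g::{topological_group_add,t2_space}) measure"
    and Q :: "'g set" and w :: "'g \<Rightarrow> real"
    and K :: "('g \<Rightarrow> complex) set" and kf :: "'g \<Rightarrow> 'g \<Rightarrow> complex"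
  assumes "sigma_compact_group TYPE('g)"
    and "left_haar M"
    and "std_nbhd Q"
    and "admissible_weight M w"
    and "rkhs M K kf"
    and "LOC M Q w kf"
    and "WUC M Q w K"
    and "0 < \<epsilon>" and "\<epsilon> < (1::real)"
  shows "\<exists>U. compact U \<and> 0 \<in> interior U \<and>
    (\<forall>(I :: nat set) (lam :: nat \<Rightarrow> 'g) (V :: nat \<Rightarrow> 'g set).
       rel_separated Q I lam \<and> U_dense U I lam \<and> disjoint_cover U I lam V \<longrightarrow>
       frame_bounds M K I
         (\<lambda>i z. complex_of_real (sqrt (measure M (V i))) * kf (lam i) z)
         (1 - \<epsilon>) (1 + \<epsilon>))"
proof -
  note haar = assms(2)
  have sM: "sets M = sets borel" by (rule haar_facts(1)[OF haar])
  have spc: "space M = UNIV" by (rule haar_facts(2)[OF haar])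
  have oQ: "open Q" "0 \<in> Q" "compact (closure Q)" using assms(3) unfolding std_nbhd_def by blast+
  have w1: "\<And>x. 1 \<le> w x" using assms(4) unfolding admissible_weight_def by blast
  obtain \<Theta> \<eta> where thW: "\<Theta> \<in> wiener M Q w" and th0: "\<forall>x. 0 \<le> \<Theta> x" and eta0: "\<forall>x. 0 \<le> \<eta> x"
    and etalim: "(\<eta> \<longlongrightarrow> 0) (at 0)"
    and wuc: "\<forall>f\<in>K. \<forall>x y. ennreal \<bar>(cmod (f x))\<^sup>2 - (cmod (f y))\<^sup>2\<bar>
         \<le> ennreal (\<eta> (- y + x)) * (\<integral>\<^sup>+ z. ennreal ((cmod (f z))\<^sup>2 * \<Theta> (- z + y)) \<partial>M)"
    using assms(7) unfolding WUC_def by (elim bexE exE conjE) blast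
  define h where "h = loc_max_R M Q (loc_max M Q \<Theta>)"
  define G where "G = (\<lambda>x. e2ennreal (ereal (w x) * h x))"
  have thc: "continuous_on UNIV \<Theta>" using thW unfolding wiener_def mem_Collect_eq by (elim conjE)
  have hm: "(\<lambda>x. ereal (w x) * h x) \<in> borel_measurable M" using thW unfolding wiener_def mem_Collect_eq h_def by (elim conjE)
  have Cfin: "(\<integral>\<^sup>+ x. G x \<partial>M) < \<infinity>" using thW unfolding wiener_def mem_Collect_eq h_def G_def by (elim conjE)
  have Gm: "G \<in> borel_measurable M" unfolding G_def
    using measurable_compose[OF hm measurable_e2ennreal] by (simp add: comp_def)
  obtain Cr where Cr: "(\<integral>\<^sup>+ x. G x \<partial>M) = ennreal Cr" "0 \<le> Cr"
  proof -
    have "\<exists>r\<ge>0. (\<integral>\<^sup>+ x. G x \<partial>M) = ennreal r" using Cfin by (subst less_top_ennreal[symmetric]) simp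
    then show ?thesis using that by blast
  qed
  define \<delta> where "\<delta> = \<epsilon> / (Cr + 1)"
  have cr1: "0 < Cr + 1" using Cr(2) by linarith
  have dpos: "0 < \<delta>" unfolding \<delta>_def using assms(8) cr1 by (rule divide_pos_pos)
  have dC: "\<delta> * Cr \<le> \<epsilon>"
  proof -
    have "\<epsilon> * Cr \<le> \<epsilon> * (Cr + 1)" using assms(8) by (intro mult_left_mono) auto
    then have "\<epsilon> * Cr / (Cr + 1) \<le> \<epsilon>" using cr1 by (simp add: divide_le_eq)
    then show ?thesis unfolding \<delta>_def by simp
  qed
  have "eventually (\<lambda>x. \<eta> x < \<delta>) (at 0)" using etalim dpos by (rule order_tendstoD(2))
  then obtain S where S: "open S" "0 \<in> S" "\<forall>x\<in>S. x \<noteq> 0 \<longrightarrow> \<eta> x < \<delta>"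
    unfolding eventually_at_topological by blast
  obtain U where U: "compact U" "0 \<in> interior U" "U \<subseteq> S" "U \<subseteq> Q"
    using small_compact_nbhd[OF S(1) oQ(1) S(2) oQ(2) oQ(3)] by blast
  have key: "ennreal (\<Theta> (- z + y)) \<le> G (- z + x)" if "x \<in> (\<lambda>u. y + u) ` U" for x y z
  proof -
    from that obtain u where u: "u \<in> U" "x = y + u" by blast
    have uQ: "u \<in> Q" using u(1) U(4) by blast
    have e: "(- z + x) + - u = - z + y" by (simp add: u(2) add.assoc[symmetric])
    have "ereal (\<Theta> (- z + y)) \<le> h (- z + x)"
      using theta_le_h[OF haar assms(3) thc th0 uQ, of "- z + x"] unfolding h_def e .
    moreover have "0 \<le> \<Theta> (- z + y)" using th0 by blast
    ultimately have "ereal (\<Theta> (- z + y)) \<le> ereal (w (- z + x)) * h (- z + x)"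
      using w1[of "- z + x"] by (intro ereal_w_mult)
    then have "e2ennreal (ereal (\<Theta> (- z + y))) \<le> G (- z + x)" unfolding G_def by (rule e2ennreal_mono)
    then show ?thesis by (simp add: e2ennreal_ereal)
  qed
  show ?thesis
  proof (intro exI conjI allI impI)
    show "compact U" by (fact U(1))
    show "0 \<in> interior U" by (fact U(2))
    fix I :: "nat set" and lam :: "nat \<Rightarrow> 'g" and V :: "nat \<Rightarrow> 'g set"
    assume "rel_separated Q I lam \<and> U_dense U I lam \<and> disjoint_cover U I lam V"
    then have dc: "disjoint_cover U I lam V" by (elim conjE)
    have Vb: "V i \<in> sets M" if "i \<in> I" for i
      using dc that sM unfolding disjoint_cover_def by simp
    have Vsub: "V i \<subseteq> (\<lambda>u. lam i + u) ` U" if "i \<in> I" for i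
      using dc that unfolding disjoint_cover_def by blast
    have disj: "disjoint_family_on V I" using dc unfolding disjoint_cover_def by (elim conjE)
    have cov: "(\<Union>i\<in>I. V i) = UNIV" using dc unfolding disjoint_cover_def by (elim conjE)
    have Vf: "emeasure M (V i) = ennreal (measure M (V i))" if "i \<in> I" for i
      by (rule Vfin[OF haar U(1) Vsub[OF that]])
    define ind where "ind n z = (if n \<in> I then indicator (V n) z else (0::ennreal))" for n z
    have indm: "ind n \<in> borel_measurable M" for n
    proof (cases "n \<in> I")
      case True
      then have "ind n = indicator (V n)" unfolding ind_def by (intro ext) simp
      then show ?thesis using Vb[OF True] by simp
    next
      case False
      then have "ind n = (\<lambda>_. 0)" unfolding ind_def by (intro ext) simp
      then show ?thesis by simp
    qed
    have sumind: "(\<Sum>n. ind n z * c) = c" for z c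
      unfolding ind_def by (rule sum_ind_single[OF disj cov])
    have ind_out: "ind n z = 0" if "n \<notin> I" for n z using that unfolding ind_def by simp
    have ind_in: "ind n z = indicator (V n) z" if "n \<in> I" for n z using that unfolding ind_def by simp
    have GTm: "(\<lambda>x. G (- z + x)) \<in> borel_measurable M" for z
      using measurable_compose[OF transl_measurable[OF sM] Gm] by simp
    have thmeas: "(\<lambda>z. ennreal (\<Theta> (- z + y))) \<in> borel_measurable M" for y
    proof -
      have "continuous_on UNIV (\<lambda>z. \<Theta> (- z + y))"
        by (rule continuous_on_compose2[OF thc]) (auto intro!: continuous_intros)
      then have "(\<lambda>z. \<Theta> (- z + y)) \<in> borel_measurable borel" by (rule borel_measurable_continuous_onI)
      then have "(\<lambda>z. \<Theta> (- z + y)) \<in> borel_measurable M" by (subst measurable_cong_sets[OF sM, of borel borel]) simp_all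
      then show ?thesis by (rule measurable_compose[OF _ measurable_ennreal])
    qed
    define T where "T n z = (if n \<in> I then ennreal (\<Theta> (- z + lam n)) * emeasure M (V n) else 0)" for n z
    have CT: "(\<Sum>n. T n z) \<le> ennreal Cr" for z
    proof -
      have each: "T n z \<le> (\<integral>\<^sup>+ x. ind n x * G (- z + x) \<partial>M)" for n
      proof (cases "n \<in> I")
        case True
        have "T n z = (\<integral>\<^sup>+ x. ennreal (\<Theta> (- z + lam n)) * indicator (V n) x \<partial>M)"
          unfolding T_def using True by (simp add: nn_integral_cmult_indicator[OF Vb[OF True]])
        also have "\<dots> \<le> (\<integral>\<^sup>+ x. ind n x * G (- z + x) \<partial>M)"
        proof (rule nn_integral_mono)
          fix x
          show "ennreal (\<Theta> (- z + lam n)) * indicator (V n) x \<le> ind n x * G (- z + x)"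
          proof (cases "x \<in> V n")
            case xin: True
            then have "x \<in> (\<lambda>u. lam n + u) ` U" using Vsub[OF True] by blast
            then have "ennreal (\<Theta> (- z + lam n)) \<le> G (- z + x)" by (rule key)
            then show ?thesis using xin True by (simp add: ind_in)
          qed (simp)
        qed
        finally show ?thesis .
      next
        case False
        then show ?thesis unfolding T_def by simp
      qed
      have "(\<Sum>n. T n z) \<le> (\<Sum>n. \<integral>\<^sup>+ x. ind n x * G (- z + x) \<partial>M)"
        by (intro suminf_le each summableI)
      also have "\<dots> = (\<integral>\<^sup>+ x. (\<Sum>n. ind n x * G (- z + x)) \<partial>M)"
        by (rule nn_integral_suminf[symmetric]) (intro borel_measurable_times_ennreal indm GTm)
      also have "\<dots> = (\<integral>\<^sup>+ x. G (- z + x) \<partial>M)" by (simp only: sumind)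
      also have "\<dots> = (\<integral>\<^sup>+ x. G x \<partial>M)" by (rule transl_inv[OF haar Gm])
      finally show ?thesis using Cr(1) by simp
    qed
    show "frame_bounds M K I (\<lambda>i z. complex_of_real (sqrt (measure M (V i))) * kf (lam i) z) (1 - \<epsilon>) (1 + \<epsilon>)"
      unfolding frame_bounds_def
      apply (intro ballI)
      subgoal premises prems for f
      proof -
      have fK: "f \<in> K" by (rule prems)
      define gi where "gi i = (cmod (L2_inner M f (\<lambda>z. complex_of_real (sqrt (measure M (V i))) * kf (lam i) z)))\<^sup>2" for i
      have fsq: "square_integrable M f"
      proof -
        have "\<forall>f\<in>K. square_integrable M f" using assms(5) unfolding rkhs_def by (elim conjE)
        then show ?thesis using fK by blast
      qed
      have fm: "f \<in> borel_measurable M" using fsq unfolding square_integrable_def by (elim conjE)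
      have fi: "integrable M (\<lambda>z. (cmod (f z))\<^sup>2)" using fsq unfolding square_integrable_def by (elim conjE)
      have repr: "f x = L2_inner M f (kf x)" for x
      proof -
        have "\<forall>f\<in>K. \<forall>x. f x = L2_inner M f (kf x)" using assms(5) unfolding rkhs_def by (elim conjE)
        then show ?thesis using fK by blast
      qed
      have wf: "ennreal \<bar>(cmod (f x))\<^sup>2 - (cmod (f y))\<^sup>2\<bar>
         \<le> ennreal (\<eta> (- y + x)) * (\<integral>\<^sup>+ z. ennreal ((cmod (f z))\<^sup>2 * \<Theta> (- z + y)) \<partial>M)" for x y
        using wuc fK by blast
      define F where "F z = ennreal ((cmod (f z))\<^sup>2)" for z
      have Fm: "F \<in> borel_measurable M" unfolding F_def using fm by measurable
      define N where "N = L2_normsq M f"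
      have N0: "0 \<le> N" unfolding N_def L2_normsq_def by (rule Bochner_Integration.integral_nonneg) simp
      have nnN: "(\<integral>\<^sup>+ z. F z \<partial>M) = ennreal N"
        unfolding F_def N_def L2_normsq_def by (rule nn_integral_eq_integral[OF fi]) simp
      have giv: "gi i = measure M (V i) * (cmod (f (lam i)))\<^sup>2" for i
      proof -
        define c where "c = complex_of_real (sqrt (measure M (V i)))"
        have "L2_inner M f (\<lambda>z. c * kf (lam i) z) = (\<integral> z. cnj c * (f z * cnj (kf (lam i) z)) \<partial>M)"
          unfolding L2_inner_def by (intro Bochner_Integration.integral_cong refl) (simp add: algebra_simps)
        also have "\<dots> = cnj c * L2_inner M f (kf (lam i))" unfolding L2_inner_def by simp
        also have "\<dots> = cnj c * f (lam i)" using repr[of "lam i"] by simp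
        finally have e: "L2_inner M f (\<lambda>z. c * kf (lam i) z) = cnj c * f (lam i)" .
        have m0: "0 \<le> measure M (V i)" by (rule measure_nonneg)
        have "gi i = (cmod (cnj c * f (lam i)))\<^sup>2" unfolding gi_def c_def[symmetric] e ..
        also have "\<dots> = (cmod c)\<^sup>2 * (cmod (f (lam i)))\<^sup>2" by (simp add: norm_mult power_mult_distrib)
        also have "(cmod c)\<^sup>2 = measure M (V i)" unfolding c_def using m0 by simp
        finally show ?thesis .
      qed
      define s where "s n = (if n \<in> I then gi n else 0)" for n
      have s0: "0 \<le> s n" for n unfolding s_def gi_def by simp
      define a where "a n = (cmod (f (lam n)))\<^sup>2" for n
      define D where "D n = (\<integral>\<^sup>+ z. ind n z * ennreal \<bar>(cmod (f z))\<^sup>2 - a n\<bar> \<partial>M)" for n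
      have absm: "(\<lambda>z. ennreal \<bar>(cmod (f z))\<^sup>2 - a n\<bar>) \<in> borel_measurable M" for n
        using fm by measurable
      have sF: "ennreal (s n) = (\<integral>\<^sup>+ z. ind n z * ennreal (a n) \<partial>M)" for n
      proof (cases "n \<in> I")
        case True
        have "(\<integral>\<^sup>+ z. ind n z * ennreal (a n) \<partial>M) = (\<integral>\<^sup>+ z. ennreal (a n) * indicator (V n) z \<partial>M)"
          using True by (simp add: ind_in mult.commute)
        also have "\<dots> = ennreal (a n) * emeasure M (V n)" by (rule nn_integral_cmult_indicator[OF Vb[OF True]])
        also have "\<dots> = ennreal (s n)" unfolding Vf[OF True] s_def giv a_def using True
          by (simp add: ennreal_mult[symmetric] mult.commute)
        finally show ?thesis ..
      next
        case False
        then show ?thesis unfolding s_def by (simp add: ind_out)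
      qed
      have P1: "ennreal (s n) \<le> (\<integral>\<^sup>+ z. ind n z * F z \<partial>M) + D n" for n
      proof -
        have "ennreal (s n) \<le> (\<integral>\<^sup>+ z. ind n z * F z + ind n z * ennreal \<bar>(cmod (f z))\<^sup>2 - a n\<bar> \<partial>M)"
          unfolding sF
        proof (rule nn_integral_mono)
          fix z
          have "ennreal (a n) \<le> F z + ennreal \<bar>(cmod (f z))\<^sup>2 - a n\<bar>"
            unfolding F_def a_def by (rule ennreal_tri) simp_all
          then have "ind n z * ennreal (a n) \<le> ind n z * (F z + ennreal \<bar>(cmod (f z))\<^sup>2 - a n\<bar>)"
            by (rule mult_left_mono) simp
          then show "ind n z * ennreal (a n) \<le> ind n z * F z + ind n z * ennreal \<bar>(cmod (f z))\<^sup>2 - a n\<bar>"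
            by (simp add: distrib_left)
        qed
        also have "\<dots> = (\<integral>\<^sup>+ z. ind n z * F z \<partial>M) + D n" unfolding D_def
          by (rule nn_integral_add) (intro borel_measurable_times_ennreal indm Fm absm)+
        finally show ?thesis .
      qed
      have P2: "(\<integral>\<^sup>+ z. ind n z * F z \<partial>M) \<le> ennreal (s n) + D n" for n
      proof -
        have "(\<integral>\<^sup>+ z. ind n z * F z \<partial>M) \<le> (\<integral>\<^sup>+ z. ind n z * ennreal (a n) + ind n z * ennreal \<bar>(cmod (f z))\<^sup>2 - a n\<bar> \<partial>M)"
        proof (rule nn_integral_mono)
          fix z
          have "F z \<le> ennreal (a n) + ennreal \<bar>a n - (cmod (f z))\<^sup>2\<bar>"
            unfolding F_def a_def by (rule ennreal_tri) simp_all
          then have "F z \<le> ennreal (a n) + ennreal \<bar>(cmod (f z))\<^sup>2 - a n\<bar>" by (simp add: abs_minus_commute)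
          then have "ind n z * F z \<le> ind n z * (ennreal (a n) + ennreal \<bar>(cmod (f z))\<^sup>2 - a n\<bar>)"
            by (rule mult_left_mono) simp
          then show "ind n z * F z \<le> ind n z * ennreal (a n) + ind n z * ennreal \<bar>(cmod (f z))\<^sup>2 - a n\<bar>"
            by (simp add: distrib_left)
        qed
        also have "\<dots> = (\<integral>\<^sup>+ z. ind n z * ennreal (a n) \<partial>M) + D n" unfolding D_def
          by (rule nn_integral_add) (intro borel_measurable_times_ennreal indm absm borel_measurable_const)+
        finally show ?thesis unfolding sF .
      qed
      have SN: "(\<Sum>n. \<integral>\<^sup>+ z. ind n z * F z \<partial>M) = ennreal N"
      proof -
        have "(\<Sum>n. \<integral>\<^sup>+ z. ind n z * F z \<partial>M) = (\<integral>\<^sup>+ z. (\<Sum>n. ind n z * F z) \<partial>M)"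
          by (rule nn_integral_suminf[symmetric]) (intro borel_measurable_times_ennreal indm Fm)
        also have "\<dots> = (\<integral>\<^sup>+ z. F z \<partial>M)" by (simp only: sumind)
        finally show ?thesis using nnN by simp
      qed
      define J where "J y = (\<integral>\<^sup>+ z. ennreal ((cmod (f z))\<^sup>2 * \<Theta> (- z + y)) \<partial>M)" for y
      define E where "E n = (if n \<in> I then J (lam n) * emeasure M (V n) else 0)" for n
      have PD: "D n \<le> ennreal \<delta> * E n" for n
      proof (cases "n \<in> I")
        case True
        have "D n \<le> (\<integral>\<^sup>+ z. (ennreal \<delta> * J (lam n)) * indicator (V n) z \<partial>M)" unfolding D_def
        proof (rule nn_integral_mono)
          fix z
          show "ind n z * ennreal \<bar>(cmod (f z))\<^sup>2 - a n\<bar> \<le> ennreal \<delta> * J (lam n) * indicator (V n) z"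
          proof (cases "z \<in> V n")
            case zin: True
            have "ennreal \<bar>(cmod (f z))\<^sup>2 - a n\<bar> \<le> ennreal \<delta> * J (lam n)"
            proof (cases "z = lam n")
              case True
              then show ?thesis by (simp add: a_def)
            next
              case False
              from zin Vsub[OF \<open>n \<in> I\<close>] obtain u where u: "u \<in> U" "z = lam n + u" by blast
              then have zu: "- lam n + z = u" by (simp add: add.assoc[symmetric])
              have "u \<noteq> 0" using False u(2) by auto
              moreover have "u \<in> S" using u(1) U(3) by blast
              ultimately have "\<eta> u < \<delta>" using S(3) by blast
              then have "ennreal (\<eta> (- lam n + z)) \<le> ennreal \<delta>" unfolding zu by (intro ennreal_leI) simp
              then have le2: "ennreal (\<eta> (- lam n + z)) * J (lam n) \<le> ennreal \<delta> * J (lam n)"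
                by (rule mult_right_mono) simp
              have "ennreal \<bar>(cmod (f z))\<^sup>2 - a n\<bar> \<le> ennreal (\<eta> (- lam n + z)) * J (lam n)"
                using wf[of z "lam n"] unfolding a_def J_def .
              then show ?thesis using le2 by (rule order_trans)
            qed
            then show ?thesis using zin True by (simp add: ind_in)
          next
            case False
            then show ?thesis using True by (simp add: ind_in)
          qed
        qed
        also have "\<dots> = ennreal \<delta> * J (lam n) * emeasure M (V n)"
          by (rule nn_integral_cmult_indicator[OF Vb[OF True]])
        also have "\<dots> = ennreal \<delta> * E n" unfolding E_def using True by (simp add: mult.assoc)
        finally show ?thesis .
      next
        case False
        then show ?thesis unfolding D_def E_def by (simp add: ind_out)
      qed
      have fthm: "(\<lambda>z. ennreal ((cmod (f z))\<^sup>2 * \<Theta> (- z + y))) = (\<lambda>z. F z * ennreal (\<Theta> (- z + y)))" for y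
        unfolding F_def using th0 by (intro ext) (simp add: ennreal_mult)
      have fthmm: "(\<lambda>z. ennreal ((cmod (f z))\<^sup>2 * \<Theta> (- z + y))) \<in> borel_measurable M" for y
        unfolding fthm by (intro borel_measurable_times_ennreal Fm thmeas)
      have Tm: "T n \<in> borel_measurable M" for n
      proof (cases "n \<in> I")
        case True
        then have "T n = (\<lambda>z. ennreal (\<Theta> (- z + lam n)) * emeasure M (V n))" unfolding T_def by (intro ext) simp
        then show ?thesis by (simp add: borel_measurable_times_ennreal thmeas)
      next
        case False
        then have "T n = (\<lambda>z. 0)" unfolding T_def by (intro ext) simp
        then show ?thesis by simp
      qed
      have SE: "(\<Sum>n. E n) \<le> ennreal N * ennreal Cr"
      proof -
        have En: "E n = (\<integral>\<^sup>+ z. F z * T n z \<partial>M)" for n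
        proof (cases "n \<in> I")
          case True
          have "E n = (\<integral>\<^sup>+ z. ennreal ((cmod (f z))\<^sup>2 * \<Theta> (- z + lam n)) * emeasure M (V n) \<partial>M)"
            unfolding E_def J_def using True by (simp add: nn_integral_multc[OF fthmm])
          also have "\<dots> = (\<integral>\<^sup>+ z. F z * T n z \<partial>M)" unfolding T_def using True
            by (intro nn_integral_cong) (simp add: F_def ennreal_mult' mult.assoc)
          finally show ?thesis .
        next
          case False
          then show ?thesis unfolding E_def T_def by simp
        qed
        have "(\<Sum>n. E n) = (\<Sum>n. \<integral>\<^sup>+ z. F z * T n z \<partial>M)" by (simp only: En)
        also have "\<dots> = (\<integral>\<^sup>+ z. (\<Sum>n. F z * T n z) \<partial>M)"
          by (rule nn_integral_suminf[symmetric]) (intro borel_measurable_times_ennreal Fm Tm)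
        also have "\<dots> = (\<integral>\<^sup>+ z. F z * (\<Sum>n. T n z) \<partial>M)" by (simp only: ennreal_suminf_cmult)
        also have "\<dots> \<le> (\<integral>\<^sup>+ z. F z * ennreal Cr \<partial>M)" by (intro nn_integral_mono mult_left_mono CT) simp
        also have "\<dots> = ennreal N * ennreal Cr" by (simp add: nn_integral_multc[OF Fm] nnN)
        finally show ?thesis .
      qed
      have eprod: "ennreal (\<delta> * Cr * N) = ennreal \<delta> * (ennreal N * ennreal Cr)"
        using dpos Cr(2) N0 by (simp add: ennreal_mult mult_ac)
      have SD: "(\<Sum>n. D n) \<le> ennreal (\<delta> * Cr * N)"
      proof -
        have "(\<Sum>n. D n) \<le> (\<Sum>n. ennreal \<delta> * E n)" by (intro suminf_le PD summableI)
        also have "\<dots> = ennreal \<delta> * (\<Sum>n. E n)" by (rule ennreal_suminf_cmult)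
        also have "\<dots> \<le> ennreal \<delta> * (ennreal N * ennreal Cr)" by (intro mult_left_mono SE) simp
        finally show ?thesis unfolding eprod .
      qed
      have SS: "(\<Sum>n. ennreal (s n)) \<le> ennreal N + ennreal (\<delta> * Cr * N)"
      proof -
        have "(\<Sum>n. ennreal (s n)) \<le> (\<Sum>n. (\<integral>\<^sup>+ z. ind n z * F z \<partial>M) + D n)" by (intro suminf_le P1 summableI)
        also have "\<dots> = (\<Sum>n. \<integral>\<^sup>+ z. ind n z * F z \<partial>M) + (\<Sum>n. D n)" by (rule suminf_add[symmetric]) (rule summableI)+
        also have "\<dots> \<le> ennreal N + ennreal (\<delta> * Cr * N)" unfolding SN by (intro add_left_mono SD)
        finally show ?thesis .
      qed
      have SS2: "ennreal N \<le> (\<Sum>n. ennreal (s n)) + ennreal (\<delta> * Cr * N)"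
      proof -
        have "ennreal N = (\<Sum>n. \<integral>\<^sup>+ z. ind n z * F z \<partial>M)" by (rule SN[symmetric])
        also have "\<dots> \<le> (\<Sum>n. ennreal (s n) + D n)" by (intro suminf_le P2 summableI)
        also have "\<dots> = (\<Sum>n. ennreal (s n)) + (\<Sum>n. D n)" by (rule suminf_add[symmetric]) (rule summableI)+
        also have "\<dots> \<le> (\<Sum>n. ennreal (s n)) + ennreal (\<delta> * Cr * N)" by (intro add_left_mono SD)
        finally show ?thesis .
      qed
      have "(\<Sum>n. ennreal (s n)) < top" using SS by (rule le_less_trans) simp
      then have fin: "(\<Sum>n. ennreal (s n)) \<noteq> top" by simp
      have sm: "summable s" by (rule summable_suminf_not_top[OF s0 fin])
      have se: "(\<Sum>n. ennreal (s n)) = ennreal (suminf s)" by (rule suminf_ennreal2[OF s0 sm])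
      have ss0: "0 \<le> suminf s" using sm s0 by (rule suminf_nonneg)
      have dcn: "\<delta> * Cr * N \<le> \<epsilon> * N" using dC N0 by (rule mult_right_mono)
      have dcn0: "0 \<le> \<delta> * Cr * N" using dpos Cr(2) N0 by simp
      have p1: "0 \<le> N + \<delta> * Cr * N" "0 \<le> suminf s + \<delta> * Cr * N" using N0 dcn0 ss0 by linarith+
      have "ennreal (suminf s) \<le> ennreal (N + \<delta> * Cr * N)" using SS unfolding se ennreal_plus[OF N0 dcn0, symmetric] .
      then have up0: "suminf s \<le> N + \<delta> * Cr * N" using ennreal_le_iff[OF p1(1)] by blast
      have "ennreal N \<le> ennreal (suminf s + \<delta> * Cr * N)" using SS2 unfolding se ennreal_plus[OF ss0 dcn0, symmetric] .
      then have lo0: "N \<le> suminf s + \<delta> * Cr * N" using ennreal_le_iff[OF p1(2)] by blast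
      have e1: "(1 + \<epsilon>) * N = N + \<epsilon> * N" "(1 - \<epsilon>) * N = N - \<epsilon> * N" by (simp_all add: algebra_simps)
      have up: "suminf s \<le> (1 + \<epsilon>) * N" using up0 dcn e1 by linarith
      have "N - \<epsilon> * N \<le> suminf s" using lo0 dcn by linarith
      then have lo: "(1 - \<epsilon>) * N \<le> suminf s" unfolding e1(2) .
      have hs: "(s has_sum suminf s) UNIV" by (rule sums_nonneg_imp_has_sum[OF summable_sums[OF sm] s0])
      have iff: "(s has_sum suminf s) UNIV \<longleftrightarrow> (gi has_sum suminf s) I"
        by (rule has_sum_cong_neutral) (simp_all add: s_def)
      have hg: "(gi has_sum suminf s) I" using hs iff by simp
      have "gi summable_on I" using hg unfolding summable_on_def by blast
      moreover have "(\<Sum>\<^sub>\<infinity>i\<in>I. gi i) = suminf s" by (rule infsumI[OF hg])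
      ultimately have "gi summable_on I \<and> (1 - \<epsilon>) * L2_normsq M f \<le> (\<Sum>\<^sub>\<infinity>i\<in>I. gi i) \<and> (\<Sum>\<^sub>\<infinity>i\<in>I. gi i) \<le> (1 + \<epsilon>) * L2_normsq M f"
        using up lo unfolding N_def by simp
      then show ?thesis unfolding gi_def[abs_def] .
      qed
      done
  qed
qed

end
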